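(* For every positive integer $n$, there exists a finite semigroup $S$ with a principal right ideal $A$ such that $\mathrm{H}_{\mathcal{R}}(S)=n$ and $\mathrm{H}_{\mathcal{R}}(A)=2n-1$.
   Context: For a semigroup $S$, $S^1$ denotes $S$ with an identity adjoined if necessary; a principal right ideal is a set of the form $aS^1$ with $a\in S$. Green's preorder on a semigroup $M$: $u\leq_{\mathcal{R}} v$ iff $uM^1\subseteq vM^1$; $\mathcal{R}$ is the associated equivalence; the $\mathcal{R}$-height $\mathrm{H}_{\mathcal{R}}(M)$ is the supremum of the cardinalities of chains in the poset of $\mathcal{R}$-classes. $\mathrm{H}_{\mathcal{R}}(A)$ is computed in $A$ as a semigroup. *)

theory Defs
  imports Main "HOL-Library.Extended_Nat"
begin

definition semigroup_on :: "'a set \<Rightarrow> ('a \<Rightarrow> 'a \<Rightarrow> 'a) \<Rightarrow> bool" where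
  "semigroup_on S f \<longleftrightarrow> (\<forall>x\<in>S. \<forall>y\<in>S. f x y \<in> S)
     \<and> (\<forall>x\<in>S. \<forall>y\<in>S. \<forall>z\<in>S. f (f x y) z = f x (f y z))"

definition right_ideal_gen :: "'a set \<Rightarrow> ('a \<Rightarrow> 'a \<Rightarrow> 'a) \<Rightarrow> 'a \<Rightarrow> 'a set" where
  "right_ideal_gen S f a = insert a {f a m | m. m \<in> S}"

definition R_le :: "'a set \<Rightarrow> ('a \<Rightarrow> 'a \<Rightarrow> 'a) \<Rightarrow> 'a \<Rightarrow> 'a \<Rightarrow> bool" where
  "R_le S f u v \<longleftrightarrow> right_ideal_gen S f u \<subseteq> right_ideal_gen S f v"

definition R_class :: "'a set \<Rightarrow> ('a \<Rightarrow> 'a \<Rightarrow> 'a) \<Rightarrow> 'a \<Rightarrow> 'a set" where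
  "R_class S f x = {y \<in> S. R_le S f y x \<and> R_le S f x y}"

definition R_classes :: "'a set \<Rightarrow> ('a \<Rightarrow> 'a \<Rightarrow> 'a) \<Rightarrow> 'a set set" where
  "R_classes S f = R_class S f ` S"

definition R_class_le :: "'a set \<Rightarrow> ('a \<Rightarrow> 'a \<Rightarrow> 'a) \<Rightarrow> 'a set \<Rightarrow> 'a set \<Rightarrow> bool" where
  "R_class_le S f C D \<longleftrightarrow> (\<exists>x\<in>C. \<exists>y\<in>D. R_le S f x y)"

definition R_chain :: "'a set \<Rightarrow> ('a \<Rightarrow> 'a \<Rightarrow> 'a) \<Rightarrow> 'a set set \<Rightarrow> bool" where
  "R_chain S f Ch \<longleftrightarrow> Ch \<subseteq> R_classes S f \<and>
     (\<forall>C\<in>Ch. \<forall>D\<in>Ch. R_class_le S f C D \<or> R_class_le S f D C)"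

definition R_height :: "'a set \<Rightarrow> ('a \<Rightarrow> 'a \<Rightarrow> 'a) \<Rightarrow> enat" where
  "R_height S f = Sup {enat (card Ch) | Ch. R_chain S f Ch \<and> finite Ch}"

end

theory Submission
  imports Defs
begin


lemma R_le_refl: "R_le S f x x" by (simp add: R_le_def)
lemma R_le_trans: "R_le S f x y \<Longrightarrow> R_le S f y z \<Longrightarrow> R_le S f x z" by (auto simp: R_le_def)

lemma R_le_iff:
  assumes sg: "semigroup_on T f" and uT: "u \<in> T" and vT: "v \<in> T"
  shows "R_le T f u v \<longleftrightarrow> (u = v \<or> (\<exists>m\<in>T. u = f v m))"
proof
  assume "R_le T f u v"
  then have "u \<in> right_ideal_gen T f v" by (auto simp: R_le_def right_ideal_gen_def)
  thus "u = v \<or> (\<exists>m\<in>T. u = f v m)" by (auto simp: right_ideal_gen_def)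
next
  assume h: "u = v \<or> (\<exists>m\<in>T. u = f v m)"
  show "R_le T f u v"
  proof (cases "u = v")
    case True thus ?thesis by (simp add: R_le_refl)
  next
    case False
    then obtain m where m: "m \<in> T" "u = f v m" using h by auto
    have "f u m' \<in> {f v m |m. m \<in> T}" if "m' \<in> T" for m'
    proof -
      have "f u m' = f v (f m m')" using sg m that vT unfolding semigroup_on_def by auto
      moreover have "f m m' \<in> T" using sg m that unfolding semigroup_on_def by auto
      ultimately show ?thesis by auto
    qed
    then show ?thesis using m unfolding R_le_def right_ideal_gen_def by auto
  qed
qed

lemma height_eq:
  fixes T :: "'a set" and \<mu> :: "'a \<Rightarrow> nat"
  assumes fin: "finite T"
    and mono: "\<And>x y. x \<in> T \<Longrightarrow> y \<in> T \<Longrightarrow> R_le T f x y \<Longrightarrow> \<mu> x \<le> \<mu> y"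
    and eqc: "\<And>x y. x \<in> T \<Longrightarrow> y \<in> T \<Longrightarrow> R_le T f x y \<Longrightarrow> \<mu> x = \<mu> y \<Longrightarrow> R_le T f y x"
    and XT: "X \<subseteq> T"
    and tot: "\<And>x y. x \<in> X \<Longrightarrow> y \<in> X \<Longrightarrow> R_le T f x y \<or> R_le T f y x"
    and inj: "inj_on \<mu> X" and V1: "\<mu> ` T \<subseteq> V" and V2: "V \<subseteq> \<mu> ` X"
  shows "R_height T f = enat (card V)"
proof -
  have VX: "\<mu> ` X = V" using V1 V2 XT by blast
  have finX: "finite X" using fin XT finite_subset by blast
  have finV: "finite V" using VX finX by blast
  have classmem: "x \<in> R_class T f x" if "x \<in> T" for x using that by (simp add: R_class_def R_le_refl)
  have classmu: "\<mu> y = \<mu> x" if "x \<in> T" "y \<in> R_class T f x" for x y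
    using that mono by (force simp: R_class_def intro: antisym)
  have classeq: "R_class T f x = R_class T f y" if "R_le T f x y" "R_le T f y x" for x y
    using that by (auto simp: R_class_def intro: R_le_trans)
  have ub: "card Ch \<le> card V" if ch: "R_chain T f Ch" for Ch
  proof -
    define phi where "phi C = \<mu> (SOME x. x \<in> C)" for C
    have rep: "\<exists>x0\<in>T. C = R_class T f x0" if "C \<in> Ch" for C
      using ch that by (auto simp: R_chain_def R_classes_def)
    have phiC: "phi C = \<mu> x" if CC: "C \<in> Ch" "x \<in> C" for C x
    proof -
      obtain x0 where x0: "x0 \<in> T" "C = R_class T f x0" using rep CC(1) by blast
      have "(SOME x. x \<in> C) \<in> C" using CC(2) by (rule someI)
      then show ?thesis unfolding phi_def using classmu x0 CC(2) by metis
    qed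
    have "inj_on phi Ch"
    proof (rule inj_onI)
      fix C D assume CD: "C \<in> Ch" "D \<in> Ch" "phi C = phi D"
      obtain x0 where x0: "x0 \<in> T" "C = R_class T f x0" using rep CD(1) by blast
      obtain y0 where y0: "y0 \<in> T" "D = R_class T f y0" using rep CD(2) by blast
      from ch CD have "R_class_le T f C D \<or> R_class_le T f D C" by (auto simp: R_chain_def)
      then obtain x y where xy: "x \<in> C" "y \<in> D" "R_le T f x y \<or> R_le T f y x"
        by (auto simp: R_class_le_def)
      have e: "\<mu> x = \<mu> y" using phiC CD xy by metis
      have xT: "x \<in> T" "y \<in> T" using xy x0 y0 by (auto simp: R_class_def)
      have "R_le T f x y \<and> R_le T f y x" using xy eqc xT e by metis
      moreover have "R_le T f x x0 \<and> R_le T f x0 x" "R_le T f y y0 \<and> R_le T f y0 y"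
        using xy x0 y0 by (auto simp: R_class_def)
      ultimately have "R_le T f x0 y0" "R_le T f y0 x0" by (meson R_le_trans)+
      then show "C = D" using x0(2) y0(2) classeq[of x0 y0] by simp
    qed
    moreover have "phi ` Ch \<subseteq> V"
    proof
      fix v assume "v \<in> phi ` Ch"
      then obtain C where C: "C \<in> Ch" "v = phi C" by blast
      then obtain x0 where "x0 \<in> T" "C = R_class T f x0" using rep by blast
      then have "v = \<mu> x0" using phiC C classmem by metis
      then show "v \<in> V" using V1 \<open>x0 \<in> T\<close> by blast
    qed
    ultimately show ?thesis by (metis card_image card_mono finV)
  qed
  define Ch0 where "Ch0 = R_class T f ` X"
  have ch0: "R_chain T f Ch0"
    unfolding R_chain_def Ch0_def R_classes_def R_class_le_def
  proof (intro conjI ballI)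
    show "R_class T f ` X \<subseteq> R_class T f ` T" using XT by blast
  next
    fix C D assume "C \<in> R_class T f ` X" "D \<in> R_class T f ` X"
    then obtain x y where xy: "x \<in> X" "y \<in> X" "C = R_class T f x" "D = R_class T f y" by blast
    then have m: "x \<in> C" "y \<in> D" using classmem XT by auto
    show "(\<exists>x\<in>C. \<exists>y\<in>D. R_le T f x y) \<or> (\<exists>x\<in>D. \<exists>y\<in>C. R_le T f x y)"
      using tot[OF xy(1,2)] m by blast
  qed
  have "inj_on (R_class T f) X"
  proof (rule inj_onI)
    fix x y assume xy: "x \<in> X" "y \<in> X" "R_class T f x = R_class T f y"
    then have "y \<in> R_class T f x" using classmem XT by auto
    then have "\<mu> y = \<mu> x" using classmu XT xy by auto
    then show "x = y" using inj xy by (auto dest: inj_onD)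
  qed
  then have cardCh0: "card Ch0 = card V" unfolding Ch0_def using card_image inj VX by metis
  have fin0: "finite Ch0" using finX Ch0_def by simp
  show ?thesis unfolding R_height_def
  proof (rule antisym)
    show "Sup {enat (card Ch) |Ch. R_chain T f Ch \<and> finite Ch} \<le> enat (card V)"
      by (rule Sup_least) (auto intro: ub)
    show "enat (card V) \<le> Sup {enat (card Ch) |Ch. R_chain T f Ch \<and> finite Ch}"
      by (rule Sup_upper, rule CollectI, rule exI[of _ Ch0]) (simp add: ch0 fin0 cardCh0)
  qed
qed

lemma transport_rig:
  assumes inj: "inj_on g T" and U: "U \<subseteq> T" "semigroup_on U f" and x: "x \<in> U"
  shows "right_ideal_gen (g ` U) (\<lambda>x y. g (f (inv_into T g x) (inv_into T g y))) (g x)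
         = g ` right_ideal_gen U f x"
proof -
  have iv: "inv_into T g (g z) = z" if "z \<in> U" for z using inj U that by (auto intro: inv_into_f_f)
  show ?thesis unfolding right_ideal_gen_def using iv x by (auto simp: image_iff) (metis iv)
qed

lemma rig_sub: "semigroup_on U f \<Longrightarrow> x \<in> U \<Longrightarrow> right_ideal_gen U f x \<subseteq> U"
  by (auto simp: right_ideal_gen_def semigroup_on_def)

lemma transport_R_le:
  assumes inj: "inj_on g T" and U: "U \<subseteq> T" "semigroup_on U f" and x: "x \<in> U" "y \<in> U"
  shows "R_le (g ` U) (\<lambda>x y. g (f (inv_into T g x) (inv_into T g y))) (g x) (g y)
         \<longleftrightarrow> R_le U f x y"
proof -
  have s: "right_ideal_gen U f x \<subseteq> T" "right_ideal_gen U f y \<subseteq> T" using rig_sub[OF U(2) x(1)] rig_sub[OF U(2) x(2)] U(1) by auto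
  have "g ` right_ideal_gen U f x \<subseteq> g ` right_ideal_gen U f y \<longleftrightarrow> right_ideal_gen U f x \<subseteq> right_ideal_gen U f y"
  proof
    assume h: "g ` right_ideal_gen U f x \<subseteq> g ` right_ideal_gen U f y"
    show "right_ideal_gen U f x \<subseteq> right_ideal_gen U f y"
    proof
      fix z assume z: "z \<in> right_ideal_gen U f x"
      then have "g z \<in> g ` right_ideal_gen U f y" using h by blast
      moreover have "z \<in> T" using z s by blast
      ultimately show "z \<in> right_ideal_gen U f y" using inj_on_image_mem_iff[OF inj _ s(2)] by blast
    qed
  qed (rule image_mono)
  then show ?thesis unfolding R_le_def transport_rig[OF assms(1-3) x(1)] transport_rig[OF assms(1-3) x(2)] .
qed

lemma transport_sg:
  assumes inj: "inj_on g T" and sg: "semigroup_on T f"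
  shows "semigroup_on (g ` T) (\<lambda>x y. g (f (inv_into T g x) (inv_into T g y)))"
  using assms unfolding semigroup_on_def by (auto simp: inv_into_f_f)

lemma height_transport:
  fixes T :: "'a set" and \<mu> :: "'a \<Rightarrow> nat" and g :: "'a \<Rightarrow> 'b"
  assumes inj: "inj_on g T" and U: "U \<subseteq> T" "semigroup_on U f" and fin: "finite U"
    and mono: "\<And>x y. x \<in> U \<Longrightarrow> y \<in> U \<Longrightarrow> R_le U f x y \<Longrightarrow> \<mu> x \<le> \<mu> y"
    and eqc: "\<And>x y. x \<in> U \<Longrightarrow> y \<in> U \<Longrightarrow> R_le U f x y \<Longrightarrow> \<mu> x = \<mu> y \<Longrightarrow> R_le U f y x"
    and XT: "X \<subseteq> U"
    and tot: "\<And>x y. x \<in> X \<Longrightarrow> y \<in> X \<Longrightarrow> R_le U f x y \<or> R_le U f y x"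
    and injm: "inj_on \<mu> X" and V1: "\<mu> ` U \<subseteq> V" and V2: "V \<subseteq> \<mu> ` X"
  shows "R_height (g ` U) (\<lambda>x y. g (f (inv_into T g x) (inv_into T g y))) = enat (card V)"
proof -
  let ?f = "\<lambda>x y. g (f (inv_into T g x) (inv_into T g y))"
  have iv: "inv_into T g (g z) = z" if "z \<in> U" for z using inj U that by (auto intro: inv_into_f_f)
  have tr: "R_le (g ` U) ?f (g x) (g y) \<longleftrightarrow> R_le U f x y" if "x \<in> U" "y \<in> U" for x y
    using transport_R_le[OF inj U that] .
  have injg: "inj_on g U" using inj U inj_on_subset by blast
  show ?thesis
  proof (rule height_eq[where \<mu> = "\<mu> \<circ> inv_into T g" and X = "g ` X"])
    show "finite (g ` U)" using fin by simp
    show "\<And>x y. x \<in> g ` U \<Longrightarrow> y \<in> g ` U \<Longrightarrow> R_le (g ` U) ?f x y \<Longrightarrow> (\<mu> \<circ> inv_into T g) x \<le> (\<mu> \<circ> inv_into T g) y"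
      using tr mono iv by auto
    show "\<And>x y. x \<in> g ` U \<Longrightarrow> y \<in> g ` U \<Longrightarrow> R_le (g ` U) ?f x y \<Longrightarrow> (\<mu> \<circ> inv_into T g) x = (\<mu> \<circ> inv_into T g) y \<Longrightarrow> R_le (g ` U) ?f y x"
      using tr eqc iv by auto
    show "g ` X \<subseteq> g ` U" using XT by blast
    show "\<And>x y. x \<in> g ` X \<Longrightarrow> y \<in> g ` X \<Longrightarrow> R_le (g ` U) ?f x y \<or> R_le (g ` U) ?f y x"
    proof -
      fix x y assume "x \<in> g ` X" "y \<in> g ` X"
      then obtain x0 y0 where "x0 \<in> X" "y0 \<in> X" "x = g x0" "y = g y0" by blast
      moreover have "x0 \<in> U" "y0 \<in> U" using XT \<open>x0 \<in> X\<close> \<open>y0 \<in> X\<close> by auto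
      ultimately show "R_le (g ` U) ?f x y \<or> R_le (g ` U) ?f y x" using tr tot by simp
    qed
    show "inj_on (\<mu> \<circ> inv_into T g) (g ` X)"
    proof (rule inj_onI)
      fix x y assume "x \<in> g ` X" "y \<in> g ` X" and e: "(\<mu> \<circ> inv_into T g) x = (\<mu> \<circ> inv_into T g) y"
      then obtain x0 y0 where xy: "x0 \<in> X" "y0 \<in> X" "x = g x0" "y = g y0" by blast
      then have "x0 \<in> U" "y0 \<in> U" using XT by auto
      then have "\<mu> x0 = \<mu> y0" using e xy iv by simp
      then show "x = y" using injm xy by (simp add: inj_on_eq_iff)
    qed
    show "(\<mu> \<circ> inv_into T g) ` g ` U \<subseteq> V" using V1 iv by auto
    show "V \<subseteq> (\<mu> \<circ> inv_into T g) ` g ` X"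
    proof
      fix v assume "v \<in> V"
      then obtain x where "x \<in> X" "v = \<mu> x" using V2 by blast
      moreover then have "v = (\<mu> \<circ> inv_into T g) (g x)" using iv XT by auto
      ultimately show "v \<in> (\<mu> \<circ> inv_into T g) ` g ` X" by blast
    qed
  qed
qed



definition NE :: "(nat \<Rightarrow> nat) \<Rightarrow> bool" where
  "NE f \<longleftrightarrow> (\<forall>x y. x \<le> y \<longrightarrow> f x \<le> f y \<and> f y \<le> f x + (y - x))"

lemma NE_comp: assumes "NE f" "NE g" shows "NE (g \<circ> f)"
  unfolding NE_def
proof (intro allI impI)
  fix x y :: nat assume "x \<le> y"
  then have "f x \<le> f y" "f y \<le> f x + (y - x)" using assms(1) by (auto simp: NE_def)
  moreover then have "g (f x) \<le> g (f y)" "g (f y) \<le> g (f x) + (f y - f x)" using assms(2) by (auto simp: NE_def)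
  ultimately show "(g \<circ> f) x \<le> (g \<circ> f) y \<and> (g \<circ> f) y \<le> (g \<circ> f) x + (y - x)" by simp
qed

lemma NE_id: "NE id" by (simp add: NE_def)

lemma NE_width: "NE s \<Longrightarrow> x \<le> y \<Longrightarrow> s x \<le> s y \<and> s y - s x \<le> y - x"
  unfolding NE_def by force

lemma NE_transl:
  assumes "NE s" "x \<le> z" "z \<le> y" "s y - s x = y - x"
  shows "s z + x = z + s x"
proof -
  have "s x \<le> s z" "s z \<le> s x + (z - x)" "s z \<le> s y" "s y \<le> s z + (y - z)"
    using assms(1-3) unfolding NE_def by auto
  then show ?thesis using assms by linarith
qed

definition cs :: "nat \<Rightarrow> nat \<Rightarrow> nat \<Rightarrow> nat \<Rightarrow> nat" where
  "cs l h c = (\<lambda>q. min (max q l) h - l + c)"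

definition SF :: "nat \<Rightarrow> (nat \<Rightarrow> nat) set" where
  "SF n = {cs l h c | l h c. l \<le> h \<and> h \<le> n \<and> c + (h - l) \<le> n \<and> \<not> (l = 0 \<and> h = n)}"

definition mulf :: "(nat \<Rightarrow> nat) \<Rightarrow> (nat \<Rightarrow> nat) \<Rightarrow> (nat \<Rightarrow> nat)" where
  "mulf f g = g \<circ> f"

definition aa :: "nat \<Rightarrow> nat \<Rightarrow> nat" where "aa n = cs 0 (n - 1) 1"

lemma SF_memI: "l \<le> h \<Longrightarrow> h \<le> n \<Longrightarrow> c + (h - l) \<le> n \<Longrightarrow> \<not> (l = 0 \<and> h = n) \<Longrightarrow> cs l h c \<in> SF n"
  unfolding SF_def by blast

lemma cs_props:
  assumes "l \<le> h"
  shows "cs l h c 0 = c" "c \<le> cs l h c q" "cs l h c q \<le> h - l + c" "NE (cs l h c)"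
    and "h \<le> n \<Longrightarrow> cs l h c n = h - l + c"
  using assms unfolding cs_def NE_def by (auto simp: min_def max_def)

lemma SF_props:
  assumes "f \<in> SF n"
  shows "NE f" "f 0 \<le> f q" "f q \<le> f n" "f n \<le> n" "f n - f 0 \<le> n - 1"
proof -
  obtain l h c where f: "f = cs l h c" "l \<le> h" "h \<le> n" "c + (h - l) \<le> n" "\<not> (l = 0 \<and> h = n)"
    using assms unfolding SF_def by blast
  show "NE f" "f 0 \<le> f q" "f q \<le> f n" "f n \<le> n" "f n - f 0 \<le> n - 1"
    using cs_props(1,4)[where l=l and h=h and c=c] cs_props(2,3)[where l=l and h=h and c=c and q=q] cs_props(5)[where l=l and h=h and c=c and n=n] f by auto
qed

lemma clamp_mono: "x \<le> y \<Longrightarrow> min (max x a) b \<le> min (max y (a::nat)) b"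
  by (simp add: min_def max_def)

lemma clamp_nest: "l \<le> L0 \<Longrightarrow> L0 \<le> H0 \<Longrightarrow> H0 \<le> h \<Longrightarrow> min (max (min (max q l) h) L0) H0 = min (max q L0) (H0::nat)"
  by (auto simp: min_def max_def)
lemma hA: "c \<le> y \<Longrightarrow> y \<le> e \<Longrightarrow> l' \<le> h' \<Longrightarrow> l' \<le> e \<Longrightarrow> min (max y l') h' = min (max y (max c l')) (min e (h'::nat))"
  by (auto simp: min_def max_def)
lemma hB: "c \<le> L \<Longrightarrow> L \<le> H \<Longrightarrow> l \<le> t \<Longrightarrow> min (max (t - l + c) L) H = min (max t (L - c + l)) (H - c + l) - l + (c::nat)"
  by (auto simp: min_def max_def)

lemma cs_comp:
  assumes "l \<le> h" "h \<le> n" "c + (h - l) \<le> n" "l' \<le> h'" "h' \<le> n" "c' + (h' - l') \<le> n"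
    "\<not> (l' = 0 \<and> h' = n)" "n \<ge> 1"
  shows "cs l' h' c' \<circ> cs l h c \<in> SF n"
proof -
  define L where "L = min (max c l') h'"
  define H where "H = min (max (c + (h - l)) l') h'"
  have yb: "c \<le> cs l h c q" "cs l h c q \<le> c + (h - l)" for q using cs_props(2,3)[OF assms(1), of c q] by (auto simp: add.commute)
  show ?thesis
  proof (cases "L = H")
    case True
    have "(cs l' h' c' \<circ> cs l h c) q = cs 0 0 (L - l' + c') q" for q
    proof -
      have "L \<le> min (max (cs l h c q) l') h'" unfolding L_def by (rule clamp_mono[OF yb(1)])
      moreover have "min (max (cs l h c q) l') h' \<le> H" unfolding H_def by (rule clamp_mono[OF yb(2)])
      ultimately have "min (max (cs l h c q) l') h' = L" using True by (simp only: antisym)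
      then show ?thesis unfolding comp_apply cs_def[of l' h' c'] cs_def[of 0 0] by simp
    qed
    moreover have "cs 0 0 (L - l' + c') \<in> SF n"
    proof -
      have "L \<le> h'" unfolding L_def by simp
      then show ?thesis using assms by (intro SF_memI) arith+
    qed
    ultimately show ?thesis by (metis ext)
  next
    case False
    have c1: "c < h'"
    proof (rule ccontr)
      assume "\<not> c < h'"
      then have "L = h'" "H = h'" unfolding L_def H_def by (auto simp: min_def max_def)
      then show False using False by simp
    qed
    have c2: "l' < c + (h - l)"
    proof (rule ccontr)
      assume "\<not> l' < c + (h - l)"
      then have "L = l'" "H = l'" using assms(4) unfolding L_def H_def by (auto simp: min_def max_def)
      then show False using False by simp
    qed
    have LH0: "L = max c l'" "H = min (c + (h - l)) h'"
      using c1 c2 assms(4) unfolding L_def H_def by (auto simp: min_def max_def)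
    have LH: "L = max c l'" "H = min (c + (h - l)) h'" "l' \<le> L" "L < H" "c \<le> L" "H \<le> c + (h-l)" "H \<le> h'"
      using LH0 False c1 c2 assms(4) by (auto simp: min_def max_def)
    have "(cs l' h' c' \<circ> cs l h c) q = cs (L - c + l) (H - c + l) (L - l' + c') q" for q
    proof -
      define t where "t = min (max q l) h"
      define X where "X = min (max t (L - c + l)) (H - c + l)"
      have t: "l \<le> t" "t \<le> h" using assms(1) unfolding t_def by auto
      have e1: "cs l h c q = t - l + c" unfolding cs_def t_def by simp
      have e2: "min (max q (L-c+l)) (H-c+l) = X"
        unfolding X_def t_def by (rule clamp_nest[symmetric]) (use LH(3-7) assms(1) in arith)+
      have e3: "min (max (t - l + c) l') h' = min (max (t - l + c) L) H"
        unfolding LH(1,2) by (rule hA) (use t c2 assms(4) in arith)+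
      have e4: "min (max (t - l + c) L) H = X - l + c"
        unfolding X_def by (rule hB) (use LH(3-7) t in arith)+
      have e5: "L - c + l \<le> X" unfolding X_def using LH by (auto simp: min_def max_def)
      have "(cs l' h' c' \<circ> cs l h c) q = X - l + c - l' + c'"
        unfolding comp_apply e1 by (simp only: cs_def e3 e4)
      moreover have "cs (L - c + l) (H - c + l) (L - l' + c') q = X - (L - c + l) + (L - l' + c')"
        by (simp only: cs_def e2)
      ultimately show ?thesis using e5 LH(3,5) by arith
    qed
    moreover have "cs (L - c + l) (H - c + l) (L - l' + c') \<in> SF n"
    proof (rule SF_memI)
      show "L - c + l \<le> H - c + l" using LH(3-7) by arith
      show "H - c + l \<le> n" using LH(3-7) assms by arith
      show "L - l' + c' + (H - c + l - (L - c + l)) \<le> n" using LH(3-7) assms by arith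
      show "\<not> (L - c + l = 0 \<and> H - c + l = n)" using LH(3-7) assms by arith
    qed
    ultimately show ?thesis by (metis ext)
  qed
qed


lemma SF_closed: assumes "n \<ge> 1" "f \<in> SF n" "g \<in> SF n" shows "g \<circ> f \<in> SF n"
proof -
  obtain l h c where f: "f = cs l h c" "l \<le> h" "h \<le> n" "c + (h - l) \<le> n"
    using assms(2) unfolding SF_def by blast
  obtain l' h' c' where g: "g = cs l' h' c'" "l' \<le> h'" "h' \<le> n" "c' + (h' - l') \<le> n" "\<not> (l' = 0 \<and> h' = n)"
    using assms(3) unfolding SF_def by blast
  show ?thesis using cs_comp[OF f(2-4) g(2-5) assms(1)] f(1) g(1) by simp
qed

lemma SF_sg: "n \<ge> 1 \<Longrightarrow> semigroup_on (SF n) mulf"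
  unfolding semigroup_on_def mulf_def using SF_closed by (auto simp: comp_assoc)

lemma SF_fin: "finite (SF n)"
proof -
  have "SF n \<subseteq> (\<lambda>(l,h,c). cs l h c) ` ({..n} \<times> {..n} \<times> {..n})"
  proof
    fix f assume "f \<in> SF n"
    then obtain l h c where f: "f = cs l h c" "l \<le> h" "h \<le> n" "c + (h - l) \<le> n"
      unfolding SF_def by blast
    then have "(l, h, c) \<in> {..n} \<times> {..n} \<times> {..n}" by auto
    then show "f \<in> (\<lambda>(l,h,c). cs l h c) ` ({..n} \<times> {..n} \<times> {..n})"
      using f(1) by (auto intro: image_eqI[of _ _ "(l,h,c)"])
  qed
  then show ?thesis by (rule finite_subset) simp
qed

lemma aa_SF: "n \<ge> 1 \<Longrightarrow> aa n \<in> SF n" unfolding aa_def by (rule SF_memI) auto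

lemma aa_eq: "aa n q = min q (n - 1) + 1" by (simp add: aa_def cs_def)

definition AS :: "nat \<Rightarrow> (nat \<Rightarrow> nat) set" where
  "AS n = right_ideal_gen (SF n) mulf (aa n)"

lemma AS_mem: "m \<in> SF n \<Longrightarrow> m \<circ> aa n \<in> AS n"
  unfolding AS_def right_ideal_gen_def mulf_def by blast

lemma AS_sub: "n \<ge> 1 \<Longrightarrow> AS n \<subseteq> SF n"
  unfolding AS_def right_ideal_gen_def mulf_def using aa_SF SF_closed by blast

lemma AS_form: "n \<ge> 1 \<Longrightarrow> f \<in> AS n \<Longrightarrow> \<exists>t. NE t \<and> f = t \<circ> aa n"
  unfolding AS_def right_ideal_gen_def mulf_def using NE_id SF_props(1) by fastforce

lemma AS_sg: assumes "n \<ge> 1" shows "semigroup_on (AS n) mulf"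
  unfolding semigroup_on_def
proof (intro conjI ballI)
  fix x y assume x: "x \<in> AS n" and y: "y \<in> AS n"
  have yS: "y \<in> SF n" using y AS_sub assms by blast
  show "mulf x y \<in> AS n"
  proof (cases "x = aa n")
    case True then show ?thesis using AS_mem[OF yS] by (simp add: mulf_def)
  next
    case False
    then obtain m where "m \<in> SF n" "x = m \<circ> aa n" using x unfolding AS_def right_ideal_gen_def mulf_def by blast
    then show ?thesis using AS_mem[OF SF_closed[OF assms \<open>m \<in> SF n\<close> yS]] by (simp add: mulf_def comp_assoc)
  qed
next
  fix x y z show "mulf (mulf x y) z = mulf x (mulf y z)" by (simp add: mulf_def comp_assoc)
qed



definition muS :: "nat \<Rightarrow> (nat \<Rightarrow> nat) \<Rightarrow> nat" where "muS n f = f n - f 0"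

lemma cs0: "cs 0 k c q = min q k + c" by (simp add: cs_def)

lemma S_mono:
  assumes n: "n \<ge> 1" and x: "x \<in> SF n" and y: "y \<in> SF n" and r: "R_le (SF n) mulf x y"
  shows "muS n x \<le> muS n y"
proof -
  have "x = y \<or> (\<exists>m\<in>SF n. x = m \<circ> y)" using r R_le_iff[OF SF_sg[OF n] x y] by (simp add: mulf_def)
  then show ?thesis
  proof
    assume "\<exists>m\<in>SF n. x = m \<circ> y"
    then obtain m where m: "m \<in> SF n" "x = m \<circ> y" by blast
    have "y 0 \<le> y n" using SF_props(2)[OF y] by blast
    then show ?thesis using NE_width[OF SF_props(1)[OF m(1)]] m(2) unfolding muS_def by simp
  qed simp
qed

lemma S_eqc:
  assumes n: "n \<ge> 1" and x: "x \<in> SF n" and y: "y \<in> SF n" and r: "R_le (SF n) mulf x y"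
    and e: "muS n x = muS n y"
  shows "R_le (SF n) mulf y x"
proof -
  have "x = y \<or> (\<exists>m\<in>SF n. x = m \<circ> y)" using r R_le_iff[OF SF_sg[OF n] x y] by (simp add: mulf_def)
  then show ?thesis
  proof
    assume "\<exists>m\<in>SF n. x = m \<circ> y"
    then obtain m where m: "m \<in> SF n" "x = m \<circ> y" by blast
    have yb: "y 0 \<le> y q" "y q \<le> y n" for q using SF_props[OF y] by auto
    have xb: "x 0 \<le> x q" "x q \<le> x n" for q using SF_props[OF x] by auto
    have w: "m (y n) - m (y 0) = y n - y 0" using e m(2) unfolding muS_def by simp
    have tr: "x q + y 0 = y q + x 0" for q
      using NE_transl[OF SF_props(1)[OF m(1)] yb(1)[of q] yb(2)[of q] w] m(2) by simp
    define s where "s = cs (x 0) (x n) (y 0)"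
    have sS: "s \<in> SF n" unfolding s_def
    proof (rule SF_memI)
      show "x 0 \<le> x n" using xb(1) by blast
      show "x n \<le> n" using SF_props(4)[OF x] .
      show "y 0 + (x n - x 0) \<le> n" using e SF_props(4)[OF y] yb(1)[of n] unfolding muS_def by simp
      show "\<not> (x 0 = 0 \<and> x n = n)" using SF_props(5)[OF x] n by auto
    qed
    have "y = s \<circ> x"
    proof
      fix q show "y q = (s \<circ> x) q" using tr[of q] xb[of q] unfolding s_def cs_def by simp
    qed
    then show ?thesis using R_le_iff[OF SF_sg[OF n] y x] sS by (auto simp: mulf_def)
  qed (simp add: R_le_refl)
qed

lemma height_S: assumes n: "n \<ge> 1" and ig: "inj_on g (SF n)"
  shows "R_height (g ` SF n) (\<lambda>x y. g (mulf (inv_into (SF n) g x) (inv_into (SF n) g y))) = enat n"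
proof -
  have "R_height (g ` SF n) (\<lambda>x y. g (mulf (inv_into (SF n) g x) (inv_into (SF n) g y))) = enat (card {..<n})"
  proof (rule height_transport[where \<mu> = "muS n" and X = "(\<lambda>k. cs 0 k 0) ` {..<n}"])
    show "inj_on g (SF n)" by (rule ig)
    show "SF n \<subseteq> SF n" by simp
    show "semigroup_on (SF n) mulf" using SF_sg[OF n] .
    show "finite (SF n)" by (rule SF_fin)
    show "\<And>x y. x \<in> SF n \<Longrightarrow> y \<in> SF n \<Longrightarrow> R_le (SF n) mulf x y \<Longrightarrow> muS n x \<le> muS n y"
      using S_mono[OF n] by blast
    show "\<And>x y. x \<in> SF n \<Longrightarrow> y \<in> SF n \<Longrightarrow> R_le (SF n) mulf x y \<Longrightarrow> muS n x = muS n y \<Longrightarrow> R_le (SF n) mulf y x"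
      using S_eqc[OF n] by blast
    have memk: "cs 0 k 0 \<in> SF n" if "k < n" for k using that by (intro SF_memI) auto
    show "(\<lambda>k. cs 0 k 0) ` {..<n} \<subseteq> SF n" using memk by blast
    have muk: "muS n (cs 0 k 0) = k" if "k < n" for k using that unfolding muS_def cs0 by simp
    show "\<And>x y. x \<in> (\<lambda>k. cs 0 k 0) ` {..<n} \<Longrightarrow> y \<in> (\<lambda>k. cs 0 k 0) ` {..<n} \<Longrightarrow> R_le (SF n) mulf x y \<or> R_le (SF n) mulf y x"
    proof -
      have le: "R_le (SF n) mulf (cs 0 j 0) (cs 0 k 0)" if "j \<le> k" "k < n" for j k
      proof -
        have "cs 0 j 0 = cs 0 j 0 \<circ> cs 0 k 0" using that by (auto simp: fun_eq_iff cs0)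
        moreover have "cs 0 j 0 \<in> SF n" using that memk by simp
        ultimately show ?thesis using R_le_iff[OF SF_sg[OF n] memk[of j] memk[of k]] that
          unfolding mulf_def by (metis le_less_trans)
      qed
      fix x y assume "x \<in> (\<lambda>k. cs 0 k 0) ` {..<n}" "y \<in> (\<lambda>k. cs 0 k 0) ` {..<n}"
      then obtain j k where "j < n" "k < n" "x = cs 0 j 0" "y = cs 0 k 0" by blast
      then show "R_le (SF n) mulf x y \<or> R_le (SF n) mulf y x" using le[of j k] le[of k j] by (cases "j \<le> k") auto
    qed
    show "inj_on (muS n) ((\<lambda>k. cs 0 k 0) ` {..<n})"
      by (rule inj_onI) (auto simp: muk)
    show "muS n ` SF n \<subseteq> {..<n}" using SF_props(5) n unfolding muS_def by fastforce
    show "{..<n} \<subseteq> muS n ` (\<lambda>k. cs 0 k 0) ` {..<n}"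
    proof
      fix k assume "k \<in> {..<n}" then show "k \<in> muS n ` (\<lambda>k. cs 0 k 0) ` {..<n}"
        using muk[of k] by (auto intro!: image_eqI[of _ _ "cs 0 k 0"])
    qed
  qed
  then show ?thesis by simp
qed



definition muA :: "nat \<Rightarrow> (nat \<Rightarrow> nat) \<Rightarrow> nat" where
  "muA n f = (if f n - f 0 = 0 then 0 else 2 * (f n - f 0) + (if f n < n then 1 else 0))"

lemma keyA:
  assumes n: "n \<ge> 1" and u: "u \<in> AS n" and v: "v \<in> AS n" and t: "NE t" and uv: "u = t \<circ> aa n \<circ> v"
  shows "muA n u \<le> muA n v \<and> (muA n u = muA n v \<longrightarrow> (\<exists>m\<in>AS n. v = m \<circ> u))"
proof -
  have uS: "u \<in> SF n" and vS: "v \<in> SF n" using u v AS_sub n by auto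
  have vb: "v 0 \<le> v q" "v q \<le> v n" for q using SF_props[OF vS] by auto
  have ub: "u 0 \<le> u q" "u q \<le> u n" for q using SF_props[OF uS] by auto
  have vn: "v n \<le> n" using SF_props(4)[OF vS] .
  have un: "u n \<le> n" using SF_props(4)[OF uS] .
  have sNE: "NE (t \<circ> aa n)" using NE_comp[OF SF_props(1)[OF aa_SF[OF n]] t] .
  have wu: "u n - u 0 \<le> v n - v 0" using NE_width[OF sNE vb(1)[of n]] uv by simp
  consider (c0) "v n - v 0 = 0" | (bad) "v n = n" "v n - v 0 \<ge> 1" | (good) "v n < n" "v n - v 0 \<ge> 1"
    using vn by linarith
  then show ?thesis
  proof cases
    case c0
    then have vc: "v q = v 0" for q using vb[of q] by simp
    have u0: "u n - u 0 = 0" using wu c0 by simp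
    define m where "m = cs 0 0 (v 0) \<circ> aa n"
    have "cs 0 0 (v 0) \<in> SF n" using vb(2)[of 0] vn n by (intro SF_memI) auto
    then have "m \<in> AS n" unfolding m_def by (rule AS_mem)
    moreover have "v = m \<circ> u" unfolding m_def using vc by (auto simp: fun_eq_iff cs0)
    ultimately show ?thesis using c0 u0 unfolding muA_def by auto
  next
    case bad
    have a1: "aa n (v n) = n" using bad n by (simp add: aa_eq)
    have a0: "aa n (v 0) = v 0 + 1" using bad n by (simp add: aa_eq)
    have "t (aa n (v n)) - t (aa n (v 0)) \<le> aa n (v n) - aa n (v 0)"
      using NE_width[OF t, of "aa n (v 0)" "aa n (v n)"] a1 a0 bad by simp
    then have "u n - u 0 \<le> v n - v 0 - 1" using uv a1 a0 bad by simp
    then have "muA n u < muA n v" using bad unfolding muA_def by auto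
    then show ?thesis by simp
  next
    case good
    have av: "aa n (v q) = v q + 1" for q using vb(2)[of q] good by (simp add: aa_eq)
    show ?thesis
    proof (cases "u n - u 0 = v n - v 0 \<and> u n < n")
      case False
      then have "muA n u < muA n v" using good wu unfolding muA_def by auto
      then show ?thesis by simp
    next
      case True
      have tr: "u q + v 0 = v q + u 0" for q
        using NE_transl[OF sNE vb(1)[of q] vb(2)[of q]] True uv by simp
      define w where "w = v n - v 0"
      define s where "s = cs (u 0 + 1) (u 0 + w + 1) (v 0)"
      have sS: "s \<in> SF n" unfolding s_def
        using True vb(1)[of n] tr[of n] vn unfolding w_def by (intro SF_memI) auto
      have "v = (s \<circ> aa n) \<circ> u"
      proof
        fix q
        have "u q \<le> n - 1" using ub(2)[of q] True by linarith
        then have "aa n (u q) = u q + 1" by (simp add: aa_eq)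
        then show "v q = ((s \<circ> aa n) \<circ> u) q"
          using tr[of q] tr[of n] ub[of q] vb(1)[of n] unfolding s_def cs_def w_def by simp
      qed
      moreover have "s \<circ> aa n \<in> AS n" using sS by (rule AS_mem)
      ultimately show ?thesis using True good unfolding muA_def by auto
    qed
  qed
qed

lemma A_R_le_iff:
  assumes n: "n \<ge> 1" and u: "u \<in> AS n" and v: "v \<in> AS n"
  shows "R_le (AS n) mulf u v \<longleftrightarrow> (u = v \<or> (\<exists>m\<in>AS n. u = m \<circ> v))"
  using R_le_iff[OF AS_sg[OF n] u v] by (simp add: mulf_def)

lemma A_mono:
  assumes n: "n \<ge> 1" and u: "u \<in> AS n" and v: "v \<in> AS n" and r: "R_le (AS n) mulf u v"
  shows "muA n u \<le> muA n v"
proof -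
  have "u = v \<or> (\<exists>m\<in>AS n. u = m \<circ> v)" using r A_R_le_iff[OF n u v] by simp
  then show ?thesis
  proof
    assume "\<exists>m\<in>AS n. u = m \<circ> v"
    then obtain m where m: "m \<in> AS n" "u = m \<circ> v" by blast
    obtain t where "NE t" "m = t \<circ> aa n" using AS_form[OF n m(1)] by blast
    then show ?thesis using keyA[OF n u v] m(2) by auto
  qed simp
qed

lemma A_eqc:
  assumes n: "n \<ge> 1" and u: "u \<in> AS n" and v: "v \<in> AS n" and r: "R_le (AS n) mulf u v"
    and e: "muA n u = muA n v"
  shows "R_le (AS n) mulf v u"
proof -
  have "u = v \<or> (\<exists>m\<in>AS n. u = m \<circ> v)" using r A_R_le_iff[OF n u v] by simp
  then show ?thesis
  proof
    assume "\<exists>m\<in>AS n. u = m \<circ> v"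
    then obtain m where m: "m \<in> AS n" "u = m \<circ> v" by blast
    obtain t where "NE t" "m = t \<circ> aa n" using AS_form[OF n m(1)] by blast
    then obtain m' where "m' \<in> AS n" "v = m' \<circ> u" using keyA[OF n u v] m(2) e by auto
    then show ?thesis using A_R_le_iff[OF n v u] by auto
  qed (simp add: R_le_refl)
qed

lemma A_memG:
  assumes n: "n \<ge> 1" and "j \<le> n - 1" "c + j \<le> n"
  shows "cs 0 j c \<in> AS n"
proof -
  have "cs 1 (j + 1) c \<in> SF n" using assms by (intro SF_memI) auto
  moreover have "cs 0 j c = cs 1 (j + 1) c \<circ> aa n"
    using assms by (auto simp: fun_eq_iff cs_def aa_eq min_def max_def)
  ultimately show ?thesis using AS_mem by metis
qed

lemma A_step:
  assumes n: "n \<ge> 1" and jk: "j \<le> k" "j + d + 1 \<le> n" "c + j \<le> n" "k + d \<le> n" "k \<le> n - 1"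
  shows "R_le (AS n) mulf (cs 0 j c) (cs 0 k d)"
proof -
  define m where "m = cs (d + 1) (d + 1 + j) c \<circ> aa n"
  have "cs (d + 1) (d + 1 + j) c \<in> SF n" using assms by (intro SF_memI) auto
  then have mA: "m \<in> AS n" unfolding m_def by (rule AS_mem)
  have "cs 0 j c = m \<circ> cs 0 k d"
  proof
    fix q
    show "cs 0 j c q = (m \<circ> cs 0 k d) q"
      using assms unfolding m_def by (simp add: cs_def aa_eq min_def max_def) arith
  qed
  moreover have "cs 0 j c \<in> AS n" "cs 0 k d \<in> AS n" using assms by (auto intro: A_memG)
  ultimately show ?thesis using A_R_le_iff[OF n] mA by blast
qed


definition EE :: "nat \<Rightarrow> nat \<Rightarrow> nat \<Rightarrow> nat" where
  "EE n i = cs 0 (i div 2) (if odd i \<or> i = 0 then 0 else n - i div 2)"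

lemma EE_props:
  assumes n: "n \<ge> 1" and i: "i \<in> insert 0 {2..<2*n}"
  shows "EE n i \<in> AS n" "muA n (EE n i) = i"
proof -
  have j: "i div 2 \<le> n - 1" using i by auto
  show "EE n i \<in> AS n" unfolding EE_def by (rule A_memG[OF n j]) (use j in auto)
  show "muA n (EE n i) = i"
  proof (cases "odd i \<or> i = 0")
    case True
    then show ?thesis using i j unfolding EE_def muA_def cs0 by (auto elim!: oddE)
  next
    case False
    then show ?thesis using i j unfolding EE_def muA_def cs0 by (auto elim!: evenE)
  qed
qed

lemma EE_tot:
  assumes n: "n \<ge> 1" and i: "i \<in> insert 0 {2..<2*n}" and i': "i' \<in> insert 0 {2..<2*n}" and le: "i \<le> i'"
  shows "R_le (AS n) mulf (EE n i) (EE n i')"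
proof (cases "i = i'")
  case True then show ?thesis by (simp add: R_le_refl)
next
  case False
  then have lt: "i < i'" using le by simp
  define c where "c = (if odd i \<or> i = 0 then 0 else n - i div 2)"
  define d where "d = (if odd i' \<or> i' = 0 then 0 else n - i' div 2)"
  have e: "EE n i = cs 0 (i div 2) c" "EE n i' = cs 0 (i' div 2) d" unfolding EE_def c_def d_def by simp_all
  have j: "i div 2 \<le> n - 1" "i' div 2 \<le> n - 1" using i i' by auto
  have jk: "i div 2 \<le> i' div 2" using le by (simp add: div_le_mono)
  have c1: "c + i div 2 \<le> n" "d + i' div 2 \<le> n" unfolding c_def d_def using j by auto
  have c2: "i div 2 + d + 1 \<le> n"
  proof (cases "odd i' \<or> i' = 0")
    case True then show ?thesis unfolding d_def using j n by auto
  next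
    case False
    then have "i div 2 < i' div 2" using lt by (auto elim!: evenE)
    then show ?thesis unfolding d_def using False j n by auto
  qed
  show ?thesis unfolding e by (rule A_step[OF n jk c2 c1(1)]) (use c1 j in auto)
qed

lemma height_A: assumes n: "n \<ge> 1" and ig: "inj_on g (SF n)"
  shows "R_height (g ` AS n) (\<lambda>x y. g (mulf (inv_into (SF n) g x) (inv_into (SF n) g y))) = enat (2 * n - 1)"
proof -
  let ?V = "insert 0 {2..<2*n}"
  have cV: "card ?V = 2 * n - 1" using n by simp
  have "R_height (g ` AS n) (\<lambda>x y. g (mulf (inv_into (SF n) g x) (inv_into (SF n) g y))) = enat (card ?V)"
  proof (rule height_transport[where \<mu> = "muA n" and X = "EE n ` ?V"])
    show "inj_on g (SF n)" by (rule ig)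
    show "AS n \<subseteq> SF n" using AS_sub[OF n] .
    show "semigroup_on (AS n) mulf" using AS_sg[OF n] .
    show "finite (AS n)" using AS_sub[OF n] SF_fin finite_subset by blast
    show "\<And>x y. x \<in> AS n \<Longrightarrow> y \<in> AS n \<Longrightarrow> R_le (AS n) mulf x y \<Longrightarrow> muA n x \<le> muA n y"
      using A_mono[OF n] by blast
    show "\<And>x y. x \<in> AS n \<Longrightarrow> y \<in> AS n \<Longrightarrow> R_le (AS n) mulf x y \<Longrightarrow> muA n x = muA n y \<Longrightarrow> R_le (AS n) mulf y x"
      using A_eqc[OF n] by blast
    show "EE n ` ?V \<subseteq> AS n" using EE_props(1)[OF n] by blast
    show "\<And>x y. x \<in> EE n ` ?V \<Longrightarrow> y \<in> EE n ` ?V \<Longrightarrow> R_le (AS n) mulf x y \<or> R_le (AS n) mulf y x"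
    proof -
      fix x y assume "x \<in> EE n ` ?V" "y \<in> EE n ` ?V"
      then obtain i i' where ii: "i \<in> ?V" "i' \<in> ?V" "x = EE n i" "y = EE n i'" by blast
      show "R_le (AS n) mulf x y \<or> R_le (AS n) mulf y x"
      proof (cases "i \<le> i'")
        case True then show ?thesis using EE_tot[OF n ii(1,2)] ii by simp
      next
        case False then show ?thesis using EE_tot[OF n ii(2,1)] ii by simp
      qed
    qed
    show "inj_on (muA n) (EE n ` ?V)"
    proof (rule inj_onI)
      fix x y assume "x \<in> EE n ` ?V" "y \<in> EE n ` ?V" "muA n x = muA n y"
      then obtain i i' where ii: "i \<in> ?V" "i' \<in> ?V" "x = EE n i" "y = EE n i'" by blast
      then have "i = i'" using EE_props(2)[OF n ii(1)] EE_props(2)[OF n ii(2)] \<open>muA n x = muA n y\<close> by simp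
      then show "x = y" using ii by simp
    qed
    show "muA n ` AS n \<subseteq> ?V"
    proof
      fix v assume "v \<in> muA n ` AS n"
      then obtain f where f: "f \<in> AS n" "v = muA n f" by blast
      then have fS: "f \<in> SF n" using AS_sub[OF n] by blast
      have "f n - f 0 \<le> n - 1" using SF_props(5)[OF fS] .
      then show "v \<in> ?V" using f(2) n unfolding muA_def by auto
    qed
    show "?V \<subseteq> muA n ` EE n ` ?V"
    proof
      fix i assume iV: "i \<in> ?V"
      have m: "muA n (EE n i) = i" using EE_props(2)[OF n iV] .
      have "EE n i \<in> EE n ` ?V" using iV by (rule imageI)
      then have "muA n (EE n i) \<in> muA n ` EE n ` ?V" by (rule imageI)
      then show "i \<in> muA n ` EE n ` ?V" unfolding m .
    qed
  qed
  then show ?thesis using cV by simp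
qed

lemma main_aux:
  fixes n :: nat
  assumes "n \<ge> 1"
  shows "\<exists>(S :: nat set) (f :: nat \<Rightarrow> nat \<Rightarrow> nat) a.
           finite S \<and> semigroup_on S f \<and> a \<in> S \<and>
           R_height S f = enat n \<and>
           R_height (right_ideal_gen S f a) f = enat (2 * n - 1)"
proof -
  obtain g :: "(nat \<Rightarrow> nat) \<Rightarrow> nat" and k where g: "g ` SF n = {i. i < k}" "inj_on g (SF n)"
    using finite_imp_inj_to_nat_seg[OF SF_fin] by blast
  define f' where "f' = (\<lambda>x y. g (mulf (inv_into (SF n) g x) (inv_into (SF n) g y)))"
  have h1: "finite (g ` SF n)" using SF_fin by simp
  have h2: "semigroup_on (g ` SF n) f'" unfolding f'_def by (rule transport_sg[OF g(2) SF_sg[OF assms]])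
  have h3: "g (aa n) \<in> g ` SF n" using aa_SF[OF assms] by blast
  have h4: "R_height (g ` SF n) f' = enat n" unfolding f'_def by (rule height_S[OF assms g(2)])
  have h5: "right_ideal_gen (g ` SF n) f' (g (aa n)) = g ` AS n"
    unfolding f'_def AS_def by (rule transport_rig[OF g(2) _ SF_sg[OF assms] aa_SF[OF assms]]) simp
  have h6: "R_height (g ` AS n) f' = enat (2 * n - 1)" unfolding f'_def by (rule height_A[OF assms g(2)])
  show ?thesis
    apply (rule exI[of _ "g ` SF n"], rule exI[of _ f'], rule exI[of _ "g (aa n)"])
    unfolding h5 using h1 h2 h3 h4 h6 by (intro conjI)
qed

theorem corollary4p6:
  fixes n :: nat
  assumes "n \<ge> 1"
  shows "\<exists>(S :: nat set) (f :: nat \<Rightarrow> nat \<Rightarrow> nat) a.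
           finite S \<and> semigroup_on S f \<and> a \<in> S \<and>
           R_height S f = enat n \<and>
           R_height (right_ideal_gen S f a) f = enat (2 * n - 1)"
  by (rule main_aux[OF assms])

end
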